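(* Let $m,n$ be positive integers. (i) For every $A\in[0,1)^{m\times n}$, $\Lambda_A(m,n)=[0,1)^m\setminus\mathbf{Bad}_A(m,n)$. (ii) For every $\boldsymbol{\gamma}\in[0,1)^m$, $\Lambda^{\boldsymbol{\gamma}}(m,n)=[0,1)^{m\times n}\setminus\mathbf{Bad}^{\boldsymbol{\gamma}}(m,n)$.
   Context: $[0,1)^{m\times n}$ is the set of real $m\times n$ matrices with entries in $[0,1)$. For $\boldsymbol{x}\in\mathbb{R}^n$, $\|\boldsymbol{x}\|=\max_i|x_i|$; for $\boldsymbol{y}\in\mathbb{R}^m$, $\langle\boldsymbol{y}\rangle=\min_{\boldsymbol{p}\in\mathbb{Z}^m}\|\boldsymbol{y}-\boldsymbol{p}\|$. For $\psi:\mathbb{N}\to[0,\infty)$, $W_{m,n}(\psi)$ is the set of pairs $(A,\boldsymbol{\gamma})\in[0,1)^{m\times n}\times[0,1)^m$ such that $\langle A\boldsymbol{q}-\boldsymbol{\gamma}\rangle<\psi(\|\boldsymbol{q}\|)$ for infinitely many $\boldsymbol{q}\in\mathbb{Z}^n$. "Decreasing" means non-increasing. $\mathcal{C}$ is the set of decreasing $\psi:\mathbb{N}\to[0,\infty)$ with $\sum_{q\ge1}q^{n-1}\psi(q)^m<\infty$. $\Lambda(m,n)=\bigcup_{\psi\in\mathcal{C}}W_{m,n}(\psi)$, $\Lambda_A(m,n)=\{\boldsymbol{\gamma}:(A,\boldsymbol{\gamma})\in\Lambda(m,n)\}$, $\Lambda^{\boldsymbol{\gamma}}(m,n)=\{A:(A,\boldsymbol{\gamma})\in\Lambda(m,n)\}$.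 $\mathbf{Bad}(m,n)=\{(A,\boldsymbol{\gamma}):\liminf_{\boldsymbol{q}\in\mathbb{Z}^n,\|\boldsymbol{q}\|\to\infty}\|\boldsymbol{q}\|^n\langle A\boldsymbol{q}-\boldsymbol{\gamma}\rangle^m>0\}$, $\mathbf{Bad}_A(m,n)=\{\boldsymbol{\gamma}\in[0,1)^m:(A,\boldsymbol{\gamma})\in\mathbf{Bad}(m,n)\}$, $\mathbf{Bad}^{\boldsymbol{\gamma}}(m,n)=\{A\in[0,1)^{m\times n}:(A,\boldsymbol{\gamma})\in\mathbf{Bad}(m,n)\}$. *)

theory Defs
  imports "HOL-Analysis.Analysis"
begin

text \<open>Dimensions m = CARD('m), n = CARD('n) are encoded by finite index types.
  A real m x n matrix is \<open>real^'n^'m\<close>, an integer vector q is \<open>int^'n\<close>.\<close>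

definition unit_cube_vec :: "(real^'m) set" where
  "unit_cube_vec = {y. \<forall>i. 0 \<le> y$i \<and> y$i < 1}"

definition unit_cube_mat :: "(real^'n^'m) set" where
  "unit_cube_mat = {A. \<forall>i j. 0 \<le> A$i$j \<and> A$i$j < 1}"

definition qnorm :: "int^'n \<Rightarrow> nat" where
  "qnorm q = Max (range (\<lambda>i. nat \<bar>q$i\<bar>))"

definition supnorm :: "real^'m \<Rightarrow> real" where
  "supnorm y = Max (range (\<lambda>i. \<bar>y$i\<bar>))"

definition distZ :: "real^'m \<Rightarrow> real" where
  "distZ y = Inf {supnorm (y - (\<chi> i. of_int (p$i))) | p :: int^'m. True}"

definition matvec_int :: "real^'n^'m \<Rightarrow> int^'n \<Rightarrow> real^'m" where
  "matvec_int A q = A *v (\<chi> j. of_int (q$j))"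

definition W_set :: "(nat \<Rightarrow> real) \<Rightarrow> ((real^'n^'m) \<times> (real^'m)) set" where
  "W_set \<psi> = {(A :: real^'n^'m, \<gamma> :: real^'m). A \<in> unit_cube_mat \<and> \<gamma> \<in> unit_cube_vec \<and>
      infinite {q :: int^'n. distZ (matvec_int A q - \<gamma>) < \<psi> (qnorm q)}}"

definition class_C :: "nat \<Rightarrow> nat \<Rightarrow> (nat \<Rightarrow> real) set" where
  "class_C m n = {\<psi>. (\<forall>q. 0 \<le> \<psi> q) \<and> (\<forall>a b. 1 \<le> a \<longrightarrow> a \<le> b \<longrightarrow> \<psi> b \<le> \<psi> a) \<and>
      summable (\<lambda>k. real (Suc k) ^ (n - 1) * \<psi> (Suc k) ^ m)}"

definition Lambda_set :: "((real^'n^'m) \<times> (real^'m)) set" where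
  "Lambda_set = (\<Union>\<psi> \<in> class_C CARD('m) CARD('n). W_set \<psi>)"

definition Bad_set :: "((real^'n^'m) \<times> (real^'m)) set" where
  "Bad_set = {(A :: real^'n^'m, \<gamma> :: real^'m). A \<in> unit_cube_mat \<and> \<gamma> \<in> unit_cube_vec \<and>
      Liminf (filtercomap qnorm sequentially)
        (\<lambda>q :: int^'n. ereal (real (qnorm q) ^ CARD('n) * distZ (matvec_int A q - \<gamma>) ^ CARD('m))) > 0}"

end

theory Submission imports Defs begin

lemma supnorm_nonneg: "0 \<le> supnorm (y::real^'m)"
proof -
  have "\<bar>y$i\<bar> \<le> supnorm y" for i unfolding supnorm_def by (rule Max_ge) auto
  then show ?thesis by (meson abs_ge_zero order_trans)
qed

lemma distZ_nonneg: "0 \<le> distZ (y::real^'m)"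
  unfolding distZ_def
  by (rule cInf_greatest) (use supnorm_nonneg in auto)

lemma qnorm_ge: "nat \<bar>q$i\<bar> \<le> qnorm q"
  unfolding qnorm_def by (rule Max_ge) auto

lemma finite_qnorm_le: "finite {q::int^'n. qnorm q \<le> N}"
proof -
  let ?B = "{-int N..int N}"
  have fin: "finite {f::'n \<Rightarrow> int. \<forall>x. (x \<in> UNIV \<longrightarrow> f x \<in> ?B) \<and> (x \<notin> UNIV \<longrightarrow> f x = 0)}"
    by (rule finite_set_of_finite_funs) auto
  have inj: "inj (vec_nth :: int^'n \<Rightarrow> _)" by (simp add: inj_on_def vec_eq_iff)
  have "{q::int^'n. qnorm q \<le> N} \<subseteq> vec_nth -` {f::'n \<Rightarrow> int. \<forall>x. (x \<in> UNIV \<longrightarrow> f x \<in> ?B) \<and> (x \<notin> UNIV \<longrightarrow> f x = 0)}"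
  proof
    fix q :: "int^'n" assume "q \<in> {q. qnorm q \<le> N}"
    then have "nat \<bar>q$i\<bar> \<le> N" for i using qnorm_ge[of q i] by auto
    then have "\<bar>q$i\<bar> \<le> int N" for i by (metis int_nat_eq abs_ge_zero of_nat_le_iff)
    then have "q$i \<in> {-int N..int N}" for i using abs_le_iff[of "q$i" "int N"] by (metis atLeastAtMost_iff minus_le_iff)
    then show "q \<in> vec_nth -` {f::'n \<Rightarrow> int. \<forall>x. (x \<in> UNIV \<longrightarrow> f x \<in> ?B) \<and> (x \<notin> UNIV \<longrightarrow> f x = 0)}" by fastforce
  qed
  then show ?thesis using finite_vimageI[OF fin inj] finite_subset by blast
qed

lemma tail_zero:
  fixes \<psi> :: "nat \<Rightarrow> real" and n m :: nat
  assumes nn: "\<forall>q. 0 \<le> \<psi> q" and dec: "\<forall>a b. 1 \<le> a \<longrightarrow> a \<le> b \<longrightarrow> \<psi> b \<le> \<psi> a"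
    and sm: "summable (\<lambda>k. real (Suc k) ^ (n - 1) * \<psi> (Suc k) ^ m)" and n1: "n \<ge> 1"
  shows "(\<lambda>t. real t ^ n * \<psi> t ^ m) \<longlonglongrightarrow> 0"
proof (rule LIMSEQ_I)
  fix r :: real assume r: "0 < r"
  define g where "g k = real (Suc k) ^ (n - 1) * \<psi> (Suc k) ^ m" for k
  have "r / 2^n > 0" using r by simp
  then obtain M where M: "\<And>a b. a \<ge> M \<Longrightarrow> norm (sum g {a..<b}) < r / 2^n"
    using sm unfolding summable_Cauchy g_def by blast
  show "\<exists>N. \<forall>t\<ge>N. norm (real t ^ n * \<psi> t ^ m - 0) < r"
  proof (intro exI allI impI)
    fix t assume t: "t \<ge> 2*M+2"
    define a where "a = t - t div 2 - 1"
    have aM: "a \<ge> M" using t unfolding a_def by linarith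
    have ca: "card {a..<t} = t - a" by simp
    have ta: "2 * (t - a) \<ge> t" "a < t" "2 * (a+1) \<ge> t" unfolding a_def using t by presburger+
    have trm: "(real t / 2) ^ (n-1) * \<psi> t ^ m \<le> g k" if k: "k \<in> {a..<t}" for k
    proof -
      have "real t / 2 \<le> real (Suc k)" using k ta(3) by simp
      then have "(real t / 2) ^ (n-1) \<le> real (Suc k) ^ (n-1)" by (rule power_mono) simp
      moreover have "\<psi> t ^ m \<le> \<psi> (Suc k) ^ m"
        using k dec nn by (intro power_mono) auto
      ultimately show ?thesis unfolding g_def
        by (intro mult_mono) (use nn in auto)
    qed
    have "(real t / 2) * ((real t / 2) ^ (n-1) * \<psi> t ^ m) \<le> real (t - a) * ((real t / 2) ^ (n-1) * \<psi> t ^ m)"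
      using ta nn by (intro mult_right_mono) auto
    also have "\<dots> = (\<Sum>k\<in>{a..<t}. (real t / 2) ^ (n-1) * \<psi> t ^ m)" by simp
    also have "\<dots> \<le> sum g {a..<t}" by (rule sum_mono) (rule trm)
    also have "\<dots> < r / 2^n" using M[OF aM, of t] by simp
    finally have "(real t / 2) ^ n * \<psi> t ^ m < r / 2^n"
      using n1 by (metis mult.assoc power_Suc Suc_diff_1 less_le_trans zero_less_one)
    then have "real t ^ n * \<psi> t ^ m < r" by (simp add: power_divide field_simps)
    moreover have "0 \<le> real t ^ n * \<psi> t ^ m" using nn by simp
    ultimately show "norm (real t ^ n * \<psi> t ^ m - 0) < r" by simp
  qed
qed


lemma lam_not_bad:
  fixes A :: "real^'n^'m" and \<gamma> :: "real^'m"
  assumes W: "(A,\<gamma>) \<in> W_set \<psi>" and C: "\<psi> \<in> class_C CARD('m) CARD('n)"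
  shows "(A,\<gamma>) \<notin> Bad_set"
proof
  assume "(A,\<gamma>) \<in> Bad_set"
  then have L: "0 < Liminf (filtercomap qnorm sequentially)
        (\<lambda>q :: int^'n. ereal (real (qnorm q) ^ CARD('n) * distZ (matvec_int A q - \<gamma>) ^ CARD('m)))"
    unfolding Bad_set_def by auto
  obtain r where r: "0 < ereal r" "ereal r < Liminf (filtercomap qnorm sequentially)
        (\<lambda>q :: int^'n. ereal (real (qnorm q) ^ CARD('n) * distZ (matvec_int A q - \<gamma>) ^ CARD('m)))"
    using ereal_dense2[OF L] by blast
  have "eventually (\<lambda>q :: int^'n. ereal r < ereal (real (qnorm q) ^ CARD('n) * distZ (matvec_int A q - \<gamma>) ^ CARD('m)))
      (filtercomap qnorm sequentially)"
    using less_LiminfD[OF r(2)] by simp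
  then obtain N where N: "\<And>q::int^'n. qnorm q \<ge> N \<Longrightarrow> r < real (qnorm q) ^ CARD('n) * distZ (matvec_int A q - \<gamma>) ^ CARD('m)"
  proof -
    from \<open>eventually _ _\<close> obtain Q where Q: "eventually Q sequentially"
      "\<forall>q::int^'n. Q (qnorm q) \<longrightarrow> ereal r < ereal (real (qnorm q) ^ CARD('n) * distZ (matvec_int A q - \<gamma>) ^ CARD('m))"
      unfolding eventually_filtercomap by blast
    from Q(1) obtain N where NQ: "\<And>t. t \<ge> N \<Longrightarrow> Q t" unfolding eventually_sequentially by blast
    show ?thesis
    proof (rule that[of N])
      fix q :: "int^'n" assume "N \<le> qnorm q"
      then have "Q (qnorm q)" by (rule NQ)
      then show "r < real (qnorm q) ^ CARD('n) * distZ (matvec_int A q - \<gamma>) ^ CARD('m)"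
        using Q(2) by simp
    qed
  qed
  from C have nn: "\<forall>q. 0 \<le> \<psi> q" and dec: "\<forall>a b. 1 \<le> a \<longrightarrow> a \<le> b \<longrightarrow> \<psi> b \<le> \<psi> a"
    and sm: "summable (\<lambda>k. real (Suc k) ^ (CARD('n) - 1) * \<psi> (Suc k) ^ CARD('m))"
    unfolding class_C_def by blast+
  have lim: "(\<lambda>t. real t ^ CARD('n) * \<psi> t ^ CARD('m)) \<longlonglongrightarrow> 0"
    by (rule tail_zero[OF nn dec sm]) (simp add: Suc_leI)
  have rpos: "0 < r" using r(1) by simp
  have "eventually (\<lambda>t. real t ^ CARD('n) * \<psi> t ^ CARD('m) < r) sequentially"
    using order_tendstoD(2)[OF lim rpos] .
  then obtain N' where N': "\<And>t. t \<ge> N' \<Longrightarrow> real t ^ CARD('n) * \<psi> t ^ CARD('m) < r"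
    unfolding eventually_sequentially by blast
  let ?S = "{q :: int^'n. distZ (matvec_int A q - \<gamma>) < \<psi> (qnorm q)}"
  have inf: "infinite ?S" using W unfolding W_set_def by auto
  have "\<not> ?S \<subseteq> {q. qnorm q \<le> max N N'}"
  proof
    assume "?S \<subseteq> {q. qnorm q \<le> max N N'}"
    then have "finite ?S" by (rule finite_subset) (rule finite_qnorm_le)
    with inf show False by contradiction
  qed
  then obtain q where q: "distZ (matvec_int A q - \<gamma>) < \<psi> (qnorm q)" "\<not> qnorm q \<le> max N N'" by blast
  have h1: "r < real (qnorm q) ^ CARD('n) * distZ (matvec_int A q - \<gamma>) ^ CARD('m)"
    using N[of q] q(2) by linarith
  have "distZ (matvec_int A q - \<gamma>) ^ CARD('m) \<le> \<psi> (qnorm q) ^ CARD('m)"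
    using q(1) distZ_nonneg by (intro power_mono) (auto intro: less_imp_le)
  then have h2: "real (qnorm q) ^ CARD('n) * distZ (matvec_int A q - \<gamma>) ^ CARD('m) \<le> real (qnorm q) ^ CARD('n) * \<psi> (qnorm q) ^ CARD('m)"
    by (rule mult_left_mono) simp
  have h3: "real (qnorm q) ^ CARD('n) * \<psi> (qnorm q) ^ CARD('m) < r" using N'[of "qnorm q"] q(2) by linarith
  from h1 h2 h3 show False by linarith
qed


lemma sum_if_le:
  fixes N :: nat and c :: real assumes c: "0 \<le> c"
  shows "(\<Sum>j<T. if j < N then c else 0) \<le> real N * c"
proof -
  have "(\<Sum>j<T. if j < N then c else 0) = (\<Sum>j\<in>{..<T} \<inter> {..<N}. c)"
    by (subst sum.inter_restrict) auto
  also have "\<dots> = real (card ({..<T} \<inter> {..<N})) * c" by simp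
  also have "\<dots> \<le> real N * c"
  proof -
    have "card ({..<T} \<inter> {..<N}) \<le> card {..<N}" by (rule card_mono) auto
    then show ?thesis using c by (intro mult_right_mono) auto
  qed
  finally show ?thesis .
qed

lemma block_bound:
  fixes N n :: nat and e :: real assumes e: "0 \<le> e" and n: "n \<ge> 1"
  shows "(\<Sum>j<T. real (Suc j) ^ (n-1) * (if Suc j \<le> N then e else 0)) \<le> real N ^ n * e"
proof -
  have "(\<Sum>j<T. real (Suc j) ^ (n-1) * (if Suc j \<le> N then e else 0))
      \<le> (\<Sum>j<T. if j < N then real N ^ (n-1) * e else 0)"
  proof (rule sum_mono)
    fix j assume "j \<in> {..<T}"
    show "real (Suc j) ^ (n-1) * (if Suc j \<le> N then e else 0) \<le> (if j < N then real N ^ (n-1) * e else 0)"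
    proof (cases "Suc j \<le> N")
      case True
      then have "real (Suc j) ^ (n-1) \<le> real N ^ (n-1)" by (intro power_mono) auto
      then show ?thesis using True e by (auto intro: mult_right_mono)
    qed auto
  qed
  also have "\<dots> \<le> real N * (real N ^ (n-1) * e)" by (rule sum_if_le) (use e in simp)
  also have "\<dots> = real N ^ n * e" using n by (metis mult.assoc power_Suc Suc_diff_1 less_le_trans zero_less_one)
  finally show ?thesis .
qed

lemma not_bad_lam:
  fixes A :: "real^'n^'m" and \<gamma> :: "real^'m"
  assumes cA: "A \<in> unit_cube_mat" and cg: "\<gamma> \<in> unit_cube_vec" and nb: "(A,\<gamma>) \<notin> Bad_set"
  shows "(A,\<gamma>) \<in> Lambda_set"
proof -
  define n where "n = CARD('n)"
  define m where "m = CARD('m)"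
  have n1: "n \<ge> 1" and m0: "0 < m" unfolding n_def m_def by (simp_all add: Suc_leI)
  define d where "d q = distZ (matvec_int A q - \<gamma>)" for q :: "int^'n"
  define f where "f q = real (qnorm q) ^ n * d q ^ m" for q :: "int^'n"
  have L: "\<not> 0 < Liminf (filtercomap qnorm sequentially) (\<lambda>q. ereal (f q))"
    using nb cA cg unfolding Bad_set_def f_def d_def n_def m_def by auto
  have ex: "\<exists>q. qnorm q \<ge> K \<and> f q \<le> \<epsilon>" if eps: "0 < \<epsilon>" for K \<epsilon>
  proof (rule ccontr)
    assume "\<not> ?thesis"
    then have "\<forall>q. K \<le> qnorm q \<longrightarrow> ereal \<epsilon> \<le> ereal (f q)" by auto
    then have "eventually (\<lambda>q. ereal \<epsilon> \<le> ereal (f q)) (filtercomap qnorm sequentially)"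
      unfolding eventually_filtercomap eventually_sequentially by blast
    then have "ereal \<epsilon> \<le> Liminf (filtercomap qnorm sequentially) (\<lambda>q. ereal (f q))"
      by (rule Liminf_bounded)
    with eps L show False by (meson ereal_less(2) less_le_trans)
  qed
  obtain qs where qs: "\<And>k. qnorm (qs k) \<ge> Suc k \<and> f (qs k) \<le> (1/2) ^ Suc k"
  proof -
    have "\<forall>k. \<exists>q. qnorm q \<ge> Suc k \<and> f q \<le> (1/2) ^ Suc k"
    proof
      fix k show "\<exists>q. qnorm q \<ge> Suc k \<and> f q \<le> (1/2) ^ Suc k" by (rule ex) simp
    qed
    then show ?thesis using that by metis
  qed
  define Nk where "Nk k = qnorm (qs k)" for k
  define e where "e k = (1/2::real) ^ k / real (Nk k) ^ n" for k
  have Nk1: "real (Nk k) \<ge> 1" for k using qs[of k] unfolding Nk_def by auto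
  have Nkn: "real (Nk k) ^ n \<ge> 1" for k using Nk1 by (simp add: one_le_power)
  have epos: "0 < e k" for k unfolding e_def using Nkn[of k] Nk1[of k] by (intro divide_pos_pos) auto
  have ele: "e k \<le> (1/2) ^ k" for k unfolding e_def using Nkn[of k]
    using Nk1[of k] by (simp add: divide_le_eq mult_le_cancel_left1)
  have eN: "real (Nk k) ^ n * e k = (1/2) ^ k" for k unfolding e_def using Nkn[of k] Nk1[of k] by simp
  have sgeo: "summable (\<lambda>k. (1/2::real) ^ k)" by (rule summable_geometric) simp
  define h where "h t k = (if t \<le> Nk k then e k else 0)" for t k
  have hnn: "0 \<le> h t k" for t k unfolding h_def using epos[of k] by simp
  have hsum: "summable (h t)" for t
    by (rule summable_comparison_test'[OF sgeo, of 0]) (use epos ele in \<open>auto simp: h_def abs_of_pos\<close>)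
  define \<psi> where "\<psi> t = root m (suminf (h t))" for t
  have snn: "0 \<le> suminf (h t)" for t by (rule suminf_nonneg[OF hsum hnn])
  have \<psi>nn: "0 \<le> \<psi> t" for t unfolding \<psi>_def by (rule real_root_ge_zero[OF snn])
  have \<psi>m: "\<psi> t ^ m = suminf (h t)" for t unfolding \<psi>_def using m0 snn by simp
  have \<psi>dec: "\<psi> b \<le> \<psi> a" if "a \<le> b" for a b
  proof -
    have "suminf (h b) \<le> suminf (h a)"
      by (rule suminf_le[OF _ hsum hsum]) (use that epos in \<open>auto simp: h_def less_imp_le\<close>)
    then show ?thesis unfolding \<psi>_def using m0 by simp
  qed
  have ssum: "summable (\<lambda>k. real (Suc k) ^ (n - 1) * \<psi> (Suc k) ^ m)"
  proof (rule summableI_nonneg_bounded)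
    fix j show "0 \<le> real (Suc j) ^ (n - 1) * \<psi> (Suc j) ^ m" using \<psi>nn by simp
  next
    fix T
    have "(\<Sum>j<T. real (Suc j) ^ (n - 1) * \<psi> (Suc j) ^ m)
        = (\<Sum>j<T. \<Sum>k. real (Suc j) ^ (n - 1) * h (Suc j) k)"
      by (simp add: \<psi>m suminf_mult[OF hsum])
    also have "\<dots> = (\<Sum>k. \<Sum>j<T. real (Suc j) ^ (n - 1) * h (Suc j) k)"
      by (rule suminf_sum[symmetric]) (intro summable_mult hsum)
    also have "\<dots> \<le> (\<Sum>k. (1/2::real) ^ k)"
    proof (rule suminf_le[OF _ _ sgeo])
      fix k
      have "(\<Sum>j<T. real (Suc j) ^ (n - 1) * h (Suc j) k) \<le> real (Nk k) ^ n * e k"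
        unfolding h_def by (rule block_bound) (use epos[of k] n1 in auto)
      then show "(\<Sum>j<T. real (Suc j) ^ (n - 1) * h (Suc j) k) \<le> (1/2) ^ k" using eN by simp
    next
      show "summable (\<lambda>k. \<Sum>j<T. real (Suc j) ^ (n - 1) * h (Suc j) k)"
        by (intro summable_sum summable_mult hsum)
    qed
    also have "\<dots> = 2" using suminf_geometric[of "1/2::real"] by simp
    finally show "(\<Sum>j<T. real (Suc j) ^ (n - 1) * \<psi> (Suc j) ^ m) \<le> 2" .
  qed
  have inC: "\<psi> \<in> class_C CARD('m) CARD('n)"
    unfolding class_C_def using \<psi>nn \<psi>dec ssum unfolding m_def n_def by blast
  have good: "d (qs k) < \<psi> (qnorm (qs k))" for k
  proof -
    have "e k = (\<Sum>i\<in>{k}. h (Nk k) i)" unfolding h_def by simp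
    also have "\<dots> \<le> suminf (h (Nk k))" by (rule sum_le_suminf[OF hsum]) (auto intro: hnn)
    finally have ek: "e k \<le> \<psi> (Nk k) ^ m" using \<psi>m by simp
    have "real (Nk k) ^ n * d (qs k) ^ m \<le> (1/2) ^ Suc k" using qs[of k] unfolding f_def Nk_def by simp
    also have "\<dots> < (1/2) ^ k" by simp
    also have "\<dots> = real (Nk k) ^ n * e k" using eN by simp
    finally have "d (qs k) ^ m < e k" using Nkn[of k] by (metis mult_less_cancel_left_pos less_le_trans zero_less_one)
    with ek have "d (qs k) ^ m < \<psi> (Nk k) ^ m" by simp
    then show ?thesis unfolding Nk_def by (rule power_less_imp_less_base) (rule \<psi>nn)
  qed
  have "infinite (range qs)"
  proof
    assume fin: "finite (range qs)"
    define M where "M = Max (qnorm ` range qs)"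
    have "qnorm (qs M) \<le> M" unfolding M_def by (rule Max_ge) (use fin in auto)
    with qs[of M] show False by simp
  qed
  moreover have "range qs \<subseteq> {q. distZ (matvec_int A q - \<gamma>) < \<psi> (qnorm q)}"
    using good unfolding d_def by auto
  ultimately have "infinite {q. distZ (matvec_int A q - \<gamma>) < \<psi> (qnorm q)}"
    using infinite_super by blast
  then have "(A,\<gamma>) \<in> W_set \<psi>" unfolding W_set_def using cA cg by simp
  with inC show ?thesis unfolding Lambda_set_def by blast
qed

lemma lam_iff:
  fixes A :: "real^'n^'m" and \<gamma> :: "real^'m"
  assumes "A \<in> unit_cube_mat" "\<gamma> \<in> unit_cube_vec"
  shows "(A,\<gamma>) \<in> Lambda_set \<longleftrightarrow> (A,\<gamma>) \<notin> Bad_set"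
  using lam_not_bad not_bad_lam assms unfolding Lambda_set_def by blast

lemma lam_cube:
  "(A,\<gamma>) \<in> (Lambda_set :: ((real^'n^'m) \<times> (real^'m)) set) \<Longrightarrow> A \<in> unit_cube_mat \<and> \<gamma> \<in> unit_cube_vec"
  unfolding Lambda_set_def W_set_def by auto

theorem corollary1p2:
  shows "(\<forall>A :: real^'n^'m. A \<in> unit_cube_mat \<longrightarrow>
            {\<gamma>. (A, \<gamma>) \<in> (Lambda_set :: ((real^'n^'m) \<times> (real^'m)) set)}
              = unit_cube_vec - {\<gamma>. (A, \<gamma>) \<in> (Bad_set :: ((real^'n^'m) \<times> (real^'m)) set)})
       \<and> (\<forall>\<gamma> :: real^'m. \<gamma> \<in> unit_cube_vec \<longrightarrow>
            {A. (A, \<gamma>) \<in> (Lambda_set :: ((real^'n^'m) \<times> (real^'m)) set)}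
              = unit_cube_mat - {A. (A, \<gamma>) \<in> (Bad_set :: ((real^'n^'m) \<times> (real^'m)) set)})"
  using lam_iff lam_cube by blast

end
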